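(* Let $G$ be a locally compact group with compact topological commutator subgroup $C=\overline{[G,G]}$, with $G/C$, $K$, $R$, $U$, $H$, $D$ as described below. Then the approximate block diagonals $\bigcup_{hk^{-1}\in lU}(hU\times kU)$ ($l\in H$, union over $h,k\in H$) are exactly the block diagonals $\bigcup_{\dot h\dot k^{-1}=\dot l}(\dot hU\times\dot kU)$ ($\dot l\in D$).
   Context: Let $p_C:G\to G/C$ be the quotient map. $G/C$ is locally compact abelian, identified with $\mathbb{R}^d\times J$ where $d\ge0$ and $J$ has a compact open subgroup $K$. Let $R\subset J$ be a complete set of representatives of $J/K$, $U=p_C^{-1}([-\tfrac12,\tfrac12)^d\times K)$, and $H\subset G$ a complete set of representatives (under $p_C$) of $\mathbb{Z}^d\times R\subset G/C$. Let $D=\mathbb{Z}^d\times J/K$ and for $g\in G$ let $\dot g=(\mathrm{id}\times p_K)(p_C(g))\in\mathbb{R}^d\times J/K$, where $p_K:J\to J/K$; $h\mapsto\dot h$ is a bijection $H\to D$ and $\dot hU$ denotes $hU$. *)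

theory Defs
  imports "HOL-Analysis.Analysis" "HOL-Algebra.Algebra"
begin

definition topological_group :: "('a, 'b) monoid_scheme \<Rightarrow> 'a topology \<Rightarrow> bool" where
  "topological_group G T \<longleftrightarrow> group G \<and> topspace T = carrier G \<and> Hausdorff_space T \<and>
     continuous_map (prod_topology T T) T (\<lambda>(x, y). x \<otimes>\<^bsub>G\<^esub> y) \<and>
     continuous_map T T (\<lambda>x. inv\<^bsub>G\<^esub> x)"

definition locally_compact_group :: "('a, 'b) monoid_scheme \<Rightarrow> 'a topology \<Rightarrow> bool" where
  "locally_compact_group G T \<longleftrightarrow> topological_group G T \<and> locally_compact_space T"

definition top_commutator :: "('a, 'b) monoid_scheme \<Rightarrow> 'a topology \<Rightarrow> 'a set" where
  "top_commutator G T = T closure_of (derived G (carrier G))"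

text \<open>The group R^d (additive), realised as extensional functions on {..<d}.\<close>
definition Rd :: "nat \<Rightarrow> (nat \<Rightarrow> real) set" where
  "Rd d = PiE {..<d} (\<lambda>_. UNIV)"

definition Rd_top :: "nat \<Rightarrow> (nat \<Rightarrow> real) topology" where
  "Rd_top d = product_topology (\<lambda>_. euclideanreal) {..<d}"

definition Rd_add :: "nat \<Rightarrow> (nat \<Rightarrow> real) \<Rightarrow> (nat \<Rightarrow> real) \<Rightarrow> (nat \<Rightarrow> real)" where
  "Rd_add d x y = (\<lambda>i\<in>{..<d}. x i + y i)"

definition Rd_diff :: "nat \<Rightarrow> (nat \<Rightarrow> real) \<Rightarrow> (nat \<Rightarrow> real) \<Rightarrow> (nat \<Rightarrow> real)" where
  "Rd_diff d x y = (\<lambda>i\<in>{..<d}. x i - y i)"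

definition Zd :: "nat \<Rightarrow> (nat \<Rightarrow> real) set" where
  "Zd d = PiE {..<d} (\<lambda>_. \<int>)"

text \<open>The map p_C : G \<rightarrow> G/C = R^d \<times> J, given as a pair (pR, pJ). The hypothesis
  that G/C is identified (as a topological group) with R^d \<times> J is expressed by: the map
  g \<mapsto> (pR g, pJ g) is a continuous open surjective homomorphism onto R^d \<times> J with kernel C.\<close>
definition quotient_identification ::
  "('a, 'b) monoid_scheme \<Rightarrow> 'a topology \<Rightarrow> 'a set \<Rightarrow> nat \<Rightarrow> ('j, 'c) monoid_scheme \<Rightarrow> 'j topology
   \<Rightarrow> ('a \<Rightarrow> nat \<Rightarrow> real) \<Rightarrow> ('a \<Rightarrow> 'j) \<Rightarrow> bool" where
  "quotient_identification G T C d J TJ pR pJ \<longleftrightarrow>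
     (\<forall>g\<in>carrier G. pR g \<in> Rd d \<and> pJ g \<in> carrier J) \<and>
     (\<forall>x\<in>carrier G. \<forall>y\<in>carrier G. pR (x \<otimes>\<^bsub>G\<^esub> y) = Rd_add d (pR x) (pR y) \<and>
                                     pJ (x \<otimes>\<^bsub>G\<^esub> y) = pJ x \<otimes>\<^bsub>J\<^esub> pJ y) \<and>
     (\<lambda>g. (pR g, pJ g)) ` carrier G = Rd d \<times> carrier J \<and>
     {g \<in> carrier G. pR g = (\<lambda>i\<in>{..<d}. 0) \<and> pJ g = \<one>\<^bsub>J\<^esub>} = C \<and>
     continuous_map T (prod_topology (Rd_top d) TJ) (\<lambda>g. (pR g, pJ g)) \<and>
     open_map T (prod_topology (Rd_top d) TJ) (\<lambda>g. (pR g, pJ g))"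

definition Uset :: "('a, 'b) monoid_scheme \<Rightarrow> nat \<Rightarrow> 'j set \<Rightarrow> ('a \<Rightarrow> nat \<Rightarrow> real) \<Rightarrow> ('a \<Rightarrow> 'j) \<Rightarrow> 'a set" where
  "Uset G d K pR pJ = {g \<in> carrier G. (\<forall>i<d. -1/2 \<le> pR g i \<and> pR g i < 1/2) \<and> pJ g \<in> K}"

text \<open>\<open>dot g\<close> = (id \<times> p_K)(p_C g) \<in> R^d \<times> J/K, with J/K the quotient group \<open>J Mod K\<close>.\<close>
definition dotmap :: "('j, 'c) monoid_scheme \<Rightarrow> 'j set \<Rightarrow> ('a \<Rightarrow> nat \<Rightarrow> real) \<Rightarrow> ('a \<Rightarrow> 'j) \<Rightarrow> 'a \<Rightarrow> (nat \<Rightarrow> real) \<times> 'j set" where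
  "dotmap J K pR pJ g = (pR g, K #>\<^bsub>J\<^esub> pJ g)"

definition D_div :: "nat \<Rightarrow> ('j, 'c) monoid_scheme \<Rightarrow> 'j set \<Rightarrow> (nat \<Rightarrow> real) \<times> 'j set \<Rightarrow> (nat \<Rightarrow> real) \<times> 'j set \<Rightarrow> (nat \<Rightarrow> real) \<times> 'j set" where
  "D_div d J K x y = (Rd_diff d (fst x) (fst y),
                      snd x \<otimes>\<^bsub>J Mod K\<^esub> inv\<^bsub>J Mod K\<^esub> (snd y))"

end

theory Submission
  imports Defs
begin

lemma int_small_zero:
  fixes x :: real
  assumes "x \<in> \<int>" "-1/2 \<le> x" "x < 1/2" shows "x = 0"
proof -
  obtain n where n: "x = of_int n" using assms(1) Ints_cases by blast
  then have "n \<ge> 0" "n \<le> 0" using assms by linarith+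
  then show ?thesis using n by simp
qed

theorem mainTheorem7:
  fixes G :: "('a, 'b) monoid_scheme" and T :: "'a topology"
    and J :: "('j, 'c) monoid_scheme" and TJ :: "'j topology"
    and C U H :: "'a set" and K R :: "'j set" and d :: nat
    and pR :: "'a \<Rightarrow> nat \<Rightarrow> real" and pJ :: "'a \<Rightarrow> 'j"
  assumes LCG: "locally_compact_group G T"
    and C_def: "C = top_commutator G T"
    and C_compact: "compactin T C"
    and J_LCA: "locally_compact_group J TJ" and J_abelian: "comm_group J"
    and pC: "quotient_identification G T C d J TJ pR pJ"
    and K_sub: "subgroup K J" and K_compact: "compactin TJ K" and K_open: "openin TJ K"
    and R_sub: "R \<subseteq> carrier J"
    and R_reps: "\<forall>j\<in>carrier J. \<exists>!r\<in>R. j \<in> K #>\<^bsub>J\<^esub> r"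
    and U_def: "U = Uset G d K pR pJ"
    and H_sub: "H \<subseteq> carrier G"
    and H_reps: "bij_betw (\<lambda>h. (pR h, pJ h)) H (Zd d \<times> R)"
  shows "\<forall>l\<in>H.
     (\<Union>{(h <#\<^bsub>G\<^esub> U) \<times> (k <#\<^bsub>G\<^esub> U) | h k. h \<in> H \<and> k \<in> H \<and>
            h \<otimes>\<^bsub>G\<^esub> inv\<^bsub>G\<^esub> k \<in> l <#\<^bsub>G\<^esub> U})
   = (\<Union>{(h <#\<^bsub>G\<^esub> U) \<times> (k <#\<^bsub>G\<^esub> U) | h k. h \<in> H \<and> k \<in> H \<and>
            D_div d J K (dotmap J K pR pJ h) (dotmap J K pR pJ k) = dotmap J K pR pJ l})"
proof -
  have gG: "group G" using LCG unfolding locally_compact_group_def topological_group_def by blast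
  interpret G: group G by (rule gG)
  interpret J: comm_group J by (rule J_abelian)
  interpret N: normal K J using J.subgroup_imp_normal[OF K_sub] .
  have pcar: "\<And>g. g \<in> carrier G \<Longrightarrow> pR g \<in> Rd d \<and> pJ g \<in> carrier J"
    and pmul: "\<And>x y. x \<in> carrier G \<Longrightarrow> y \<in> carrier G \<Longrightarrow>
        pR (x \<otimes>\<^bsub>G\<^esub> y) = Rd_add d (pR x) (pR y) \<and> pJ (x \<otimes>\<^bsub>G\<^esub> y) = pJ x \<otimes>\<^bsub>J\<^esub> pJ y"
    using pC unfolding quotient_identification_def by blast+
  have hom: "pJ \<in> hom G J" unfolding hom_def using pcar pmul by auto
  interpret PJ: group_hom G J pJ by (unfold_locales) (rule hom)
  have pR1: "pR \<one>\<^bsub>G\<^esub> i = 0" if "i < d" for i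
  proof -
    have "pR \<one>\<^bsub>G\<^esub> = Rd_add d (pR \<one>\<^bsub>G\<^esub>) (pR \<one>\<^bsub>G\<^esub>)" using pmul[of "\<one>\<^bsub>G\<^esub>" "\<one>\<^bsub>G\<^esub>"] by simp
    then have "pR \<one>\<^bsub>G\<^esub> i = pR \<one>\<^bsub>G\<^esub> i + pR \<one>\<^bsub>G\<^esub> i" using that unfolding Rd_add_def
      by (metis lessThan_iff restrict_apply')
    then show ?thesis by simp
  qed
  have pRinv: "pR (inv\<^bsub>G\<^esub> x) i = - pR x i" if "x \<in> carrier G" "i < d" for x i
  proof -
    have "pR (x \<otimes>\<^bsub>G\<^esub> inv\<^bsub>G\<^esub> x) i = pR x i + pR (inv\<^bsub>G\<^esub> x) i"
      using pmul[of x "inv\<^bsub>G\<^esub> x"] that unfolding Rd_add_def by simp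
    then show ?thesis using that pR1 by simp
  qed
  have pRmul: "pR (x \<otimes>\<^bsub>G\<^esub> y) i = pR x i + pR y i" if "x \<in> carrier G" "y \<in> carrier G" "i < d" for x y i
    using pmul[OF that(1,2)] that(3) unfolding Rd_add_def by simp
  have Usub: "U \<subseteq> carrier G" unfolding U_def Uset_def by auto
  have lcos: "x \<in> l <#\<^bsub>G\<^esub> U \<longleftrightarrow> inv\<^bsub>G\<^esub> l \<otimes>\<^bsub>G\<^esub> x \<in> U"
    if "l \<in> carrier G" "x \<in> carrier G" for l x
  proof
    assume "x \<in> l <#\<^bsub>G\<^esub> U"
    then obtain u where u: "u \<in> U" "x = l \<otimes>\<^bsub>G\<^esub> u" unfolding l_coset_def by auto
    then have "inv\<^bsub>G\<^esub> l \<otimes>\<^bsub>G\<^esub> x = u" using that Usub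
      by (metis G.inv_solve_left' subsetD)
    then show "inv\<^bsub>G\<^esub> l \<otimes>\<^bsub>G\<^esub> x \<in> U" using u by simp
  next
    assume a: "inv\<^bsub>G\<^esub> l \<otimes>\<^bsub>G\<^esub> x \<in> U"
    have "x = l \<otimes>\<^bsub>G\<^esub> (inv\<^bsub>G\<^esub> l \<otimes>\<^bsub>G\<^esub> x)" using that
      by (simp add: G.m_assoc[symmetric])
    then show "x \<in> l <#\<^bsub>G\<^esub> U" using a unfolding l_coset_def by auto
  qed
  have HZ: "pR h \<in> Zd d" if "h \<in> H" for h
    using bij_betw_imp_surj_on[OF H_reps] that by auto
  have coseq: "K #>\<^bsub>J\<^esub> a = K #>\<^bsub>J\<^esub> c \<longleftrightarrow> a \<otimes>\<^bsub>J\<^esub> inv\<^bsub>J\<^esub> c \<in> K"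
    if "a \<in> carrier J" "c \<in> carrier J" for a c
  proof
    assume "K #>\<^bsub>J\<^esub> a = K #>\<^bsub>J\<^esub> c"
    moreover have "a \<in> K #>\<^bsub>J\<^esub> a" using that by (simp add: J.rcos_self K_sub)
    ultimately show "a \<otimes>\<^bsub>J\<^esub> inv\<^bsub>J\<^esub> c \<in> K"
      using subgroup.rcos_module_imp[OF K_sub J.is_group that(2)] by simp
  next
    assume "a \<otimes>\<^bsub>J\<^esub> inv\<^bsub>J\<^esub> c \<in> K"
    then have "a \<in> K #>\<^bsub>J\<^esub> c" using subgroup.rcos_module_rev[OF K_sub J.is_group that(2,1)] by simp
    then show "K #>\<^bsub>J\<^esub> a = K #>\<^bsub>J\<^esub> c"
      using J.repr_independence[OF _ that(2) K_sub] by simp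
  qed
  have key: "h \<otimes>\<^bsub>G\<^esub> inv\<^bsub>G\<^esub> k \<in> l <#\<^bsub>G\<^esub> U \<longleftrightarrow>
      D_div d J K (dotmap J K pR pJ h) (dotmap J K pR pJ k) = dotmap J K pR pJ l"
    if hH: "h \<in> H" and kH: "k \<in> H" and lH: "l \<in> H" for h k l
  proof -
    have hc: "h \<in> carrier G" and kc: "k \<in> carrier G" and lc: "l \<in> carrier G"
      using hH kH lH H_sub by auto
    define g where "g = inv\<^bsub>G\<^esub> l \<otimes>\<^bsub>G\<^esub> (h \<otimes>\<^bsub>G\<^esub> inv\<^bsub>G\<^esub> k)"
    have gc: "g \<in> carrier G" unfolding g_def using hc kc lc by simp
    have pRg: "pR g i = (pR h i - pR k i) - pR l i" if "i < d" for i
      unfolding g_def using hc kc lc that by (simp add: pRmul pRinv)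
    have pJg: "pJ g = (pJ h \<otimes>\<^bsub>J\<^esub> inv\<^bsub>J\<^esub> pJ k) \<otimes>\<^bsub>J\<^esub> inv\<^bsub>J\<^esub> pJ l"
      unfolding g_def using hc kc lc by (simp add: PJ.hom_inv J.m_comm)
    have Zi: "pR x i \<in> \<int>" if "x \<in> H" "i < d" for x i
      using HZ[OF that(1)] that(2) unfolding Zd_def PiE_def Pi_def by auto
    have ext: "pR x \<in> extensional {..<d}" if "x \<in> carrier G" for x
      using pcar[OF that] unfolding Rd_def PiE_def by auto
    have part1: "(\<forall>i<d. -1/2 \<le> pR g i \<and> pR g i < 1/2) \<longleftrightarrow> Rd_diff d (pR h) (pR k) = pR l"
    proof
      assume a: "\<forall>i<d. -1/2 \<le> pR g i \<and> pR g i < 1/2"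
      have "pR g i = 0" if "i < d" for i
      proof (rule int_small_zero)
        show "pR g i \<in> \<int>" using pRg[OF that] Zi[OF hH that] Zi[OF kH that] Zi[OF lH that] by simp
      qed (use a that in auto)
      then have "\<forall>i<d. pR h i - pR k i = pR l i" using pRg by fastforce
      then show "Rd_diff d (pR h) (pR k) = pR l" unfolding Rd_diff_def
        using ext[OF lc] by (auto simp: extensional_def fun_eq_iff)
    next
      assume "Rd_diff d (pR h) (pR k) = pR l"
      then have "\<forall>i<d. pR h i - pR k i = pR l i" unfolding Rd_diff_def
        by (metis lessThan_iff restrict_apply')
      then show "\<forall>i<d. -1/2 \<le> pR g i \<and> pR g i < 1/2" using pRg by simp
    qed
    have pjc: "pJ h \<in> carrier J" "pJ k \<in> carrier J" "pJ l \<in> carrier J" using hc kc lc pcar by auto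
    have incar: "K #>\<^bsub>J\<^esub> pJ k \<in> carrier (J Mod K)"
      using pjc unfolding FactGroup_def RCOSETS_def by auto
    have part2: "pJ g \<in> K \<longleftrightarrow>
      (K #>\<^bsub>J\<^esub> pJ h) \<otimes>\<^bsub>J Mod K\<^esub> inv\<^bsub>J Mod K\<^esub> (K #>\<^bsub>J\<^esub> pJ k) = K #>\<^bsub>J\<^esub> pJ l"
    proof -
      have "(K #>\<^bsub>J\<^esub> pJ h) \<otimes>\<^bsub>J Mod K\<^esub> inv\<^bsub>J Mod K\<^esub> (K #>\<^bsub>J\<^esub> pJ k)
            = K #>\<^bsub>J\<^esub> (pJ h \<otimes>\<^bsub>J\<^esub> inv\<^bsub>J\<^esub> pJ k)"
        using pjc incar by (simp add: N.inv_FactGroup N.rcos_inv N.rcos_sum)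
      then show ?thesis using pJg coseq pjc by simp
    qed
    have "h \<otimes>\<^bsub>G\<^esub> inv\<^bsub>G\<^esub> k \<in> l <#\<^bsub>G\<^esub> U \<longleftrightarrow> g \<in> U"
      unfolding g_def using lcos hc kc lc by simp
    also have "\<dots> \<longleftrightarrow> (\<forall>i<d. -1/2 \<le> pR g i \<and> pR g i < 1/2) \<and> pJ g \<in> K"
      unfolding U_def Uset_def using gc by simp
    also have "\<dots> \<longleftrightarrow> D_div d J K (dotmap J K pR pJ h) (dotmap J K pR pJ k) = dotmap J K pR pJ l"
      unfolding D_div_def dotmap_def using part1 part2 by simp
    finally show ?thesis .
  qed
  show ?thesis
  proof
    fix l assume lH: "l \<in> H"
    have "{(h <#\<^bsub>G\<^esub> U) \<times> (k <#\<^bsub>G\<^esub> U) | h k. h \<in> H \<and> k \<in> H \<and>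
            h \<otimes>\<^bsub>G\<^esub> inv\<^bsub>G\<^esub> k \<in> l <#\<^bsub>G\<^esub> U}
        = {(h <#\<^bsub>G\<^esub> U) \<times> (k <#\<^bsub>G\<^esub> U) | h k. h \<in> H \<and> k \<in> H \<and>
            D_div d J K (dotmap J K pR pJ h) (dotmap J K pR pJ k) = dotmap J K pR pJ l}"
      using key[OF _ _ lH] by blast
    then show "\<Union>{(h <#\<^bsub>G\<^esub> U) \<times> (k <#\<^bsub>G\<^esub> U) | h k. h \<in> H \<and> k \<in> H \<and>
            h \<otimes>\<^bsub>G\<^esub> inv\<^bsub>G\<^esub> k \<in> l <#\<^bsub>G\<^esub> U}
        = \<Union>{(h <#\<^bsub>G\<^esub> U) \<times> (k <#\<^bsub>G\<^esub> U) | h k. h \<in> H \<and> k \<in> H \<and>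
            D_div d J K (dotmap J K pR pJ h) (dotmap J K pR pJ k) = dotmap J K pR pJ l}"
      by simp
  qed
qed

end
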